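(* Let $(\mathcal T,d)$ be a metric space, $f:\mathcal X^n\to\mathcal T$, $\ell:\mathbb R_+\to\mathbb R_+$ non-decreasing, $L(s,t)=\ell(d(s,t))$, and $\varepsilon>0$. If $M$ is an $\varepsilon$-differentially private mechanism with values in $\mathcal T$, then for every integer $k\ge1$, $$\sup_{x\in\mathcal X^n}\mathbb E[L(M(x),f(x))]\ge \sup_{x\in\mathcal X^n}\frac{\ell(\omega_f(x;k)/2)}{e^{k\varepsilon}+1}.$$ If $M$ is additionally $L$-unbiased, then for every $x\in\mathcal X^n$ and every integer $k\ge1$, $$\mathbb E[L(M(x),f(x))]\ge \frac{\ell(\omega_f(x;k)/2)}{e^{2k\varepsilon}+1}.$$
   Context: For $x,x'\in\mathcal X^n$, $d_H(x,x')=|\{i:x_i\neq x_i'\}|$ is the Hamming distance; $x,x'$ are neighboring if $d_H(x,x')\le 1$. A mechanism $M$ is $\varepsilon$-differentially private if for all neighboring $x,x'$ and all measurable $S$, $\mathbb P(M(x)\in S)\le e^{\varepsilon}\mathbb P(M(x')\in S)$. The local modulus of continuity is $\omega_f(x;k)=\sup\{d(f(x),f(x')):x'\in\mathcal X^n,\ d_H(x,x')\le k\}$ for real $k\ge0$. A mechanism $M$ is $L$-unbiased if $\mathbb E[L(M(x),f(x))]\le \mathbb E[L(M(x),t)]$ for all $x\in\mathcal X^n$, $t\in\mathcal T$. *)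

theory Defs
  imports "HOL-Probability.Probability"
begin

text \<open>Datasets are elements of X^n, modelled as functions from a finite index type 'n
  (with CARD('n) = n) to the data type 'x (X = UNIV).\<close>

definition hamming :: "('n::finite \<Rightarrow> 'x) \<Rightarrow> ('n \<Rightarrow> 'x) \<Rightarrow> nat" where
  "hamming x y = card {i. x i \<noteq> y i}"

definition neighboring :: "('n::finite \<Rightarrow> 'x) \<Rightarrow> ('n \<Rightarrow> 'x) \<Rightarrow> bool" where
  "neighboring x y \<longleftrightarrow> hamming x y \<le> 1"

definition mechanism :: "(('n::finite \<Rightarrow> 'x) \<Rightarrow> 't::metric_space measure) \<Rightarrow> bool" where
  "mechanism M \<longleftrightarrow> (\<forall>x. prob_space (M x) \<and> sets (M x) = sets borel)"

definition diff_private ::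
  "real \<Rightarrow> (('n::finite \<Rightarrow> 'x) \<Rightarrow> 't::metric_space measure) \<Rightarrow> bool" where
  "diff_private \<epsilon> M \<longleftrightarrow>
     (\<forall>x x'. neighboring x x' \<longrightarrow>
        (\<forall>S \<in> sets borel. measure (M x) S \<le> exp \<epsilon> * measure (M x') S))"

definition loc_mod ::
  "(('n::finite \<Rightarrow> 'x) \<Rightarrow> 't::metric_space) \<Rightarrow> ('n \<Rightarrow> 'x) \<Rightarrow> real \<Rightarrow> ereal" where
  "loc_mod f x k = (SUP x' \<in> {x'. real (hamming x x') \<le> k}. ereal (dist (f x) (f x')))"

definition exp_loss ::
  "(real \<Rightarrow> real) \<Rightarrow> (('n::finite \<Rightarrow> 'x) \<Rightarrow> 't::metric_space measure) \<Rightarrow> ('n \<Rightarrow> 'x) \<Rightarrow> 't \<Rightarrow> ennreal" where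
  "exp_loss l M x t = (\<integral>\<^sup>+ s. ennreal (l (dist s t)) \<partial>M x)"

definition unbiased ::
  "(real \<Rightarrow> real) \<Rightarrow> (('n::finite \<Rightarrow> 'x) \<Rightarrow> 't::metric_space measure) \<Rightarrow> (('n \<Rightarrow> 'x) \<Rightarrow> 't) \<Rightarrow> bool" where
  "unbiased l M f \<longleftrightarrow> (\<forall>x t. exp_loss l M x (f x) \<le> exp_loss l M x t)"

text \<open>l applied to an extended nonnegative argument: at infinity we use the
  (monotone) limit sup_{t>=0} l(t).\<close>
definition ell_ext :: "(real \<Rightarrow> real) \<Rightarrow> ereal \<Rightarrow> ennreal" where
  "ell_ext l w = (if w = \<infinity> then (SUP t \<in> {0..}. ennreal (l t)) else ennreal (l (real_of_ereal w)))"

end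

theory Submission
  imports Defs
begin

lemma mech_space: "mechanism M \<Longrightarrow> space (M x) = UNIV"
  unfolding mechanism_def by (metis sets_eq_imp_space_eq space_borel)

lemma mech_sets: "mechanism M \<Longrightarrow> sets (M x) = sets borel"
  unfolding mechanism_def by blast

lemma mech_prob: "mechanism M \<Longrightarrow> prob_space (M x)"
  unfolding mechanism_def by blast

lemma hamming_step:
  fixes x x' :: "'n::finite \<Rightarrow> 'x"
  assumes "hamming x x' = Suc m"
  obtains y where "neighboring x y" "hamming y x' = m"
proof -
  have "{i. x i \<noteq> x' i} \<noteq> {}" using assms unfolding hamming_def by (metis card.empty nat.distinct(1))
  then obtain i where i: "x i \<noteq> x' i" by blast
  define y where "y = x(i := x' i)"
  have "{j. x j \<noteq> y j} \<subseteq> {i}" unfolding y_def by auto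
  hence "card {j. x j \<noteq> y j} \<le> 1" by (metis card.empty card_insert_disjoint card_mono empty_iff finite.intros(1) finite_insert le_numeral_extra(4) One_nat_def)
  hence "neighboring x y" unfolding neighboring_def hamming_def .
  moreover have "{j. y j \<noteq> x' j} = {j. x j \<noteq> x' j} - {i}" unfolding y_def using i by auto
  hence "hamming y x' = m" using assms i unfolding hamming_def by (simp add: card_Diff_singleton)
  ultimately show ?thesis using that by blast
qed

lemma group_priv_aux:
  fixes M :: "('n::finite \<Rightarrow> 'x) \<Rightarrow> 't::metric_space measure"
  assumes dp: "diff_private \<epsilon> M" and mech: "mechanism M" and S: "S \<in> sets borel"
  shows "hamming x x' = m \<Longrightarrow> measure (M x) S \<le> exp (real m * \<epsilon>) * measure (M x') S"
proof (induction m arbitrary: x)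
  case 0
  hence "{i. x i \<noteq> x' i} = {}" unfolding hamming_def by simp
  hence "x = x'" by auto
  thus ?case by simp
next
  case (Suc m)
  obtain y where y: "neighboring x y" "hamming y x' = m" using Suc.prems by (rule hamming_step)
  have "measure (M x) S \<le> exp \<epsilon> * measure (M y) S" using dp y(1) S unfolding diff_private_def by blast
  also have "\<dots> \<le> exp \<epsilon> * (exp (real m * \<epsilon>) * measure (M x') S)"
    using Suc.IH[OF y(2)] by (intro mult_left_mono) auto
  also have "\<dots> = exp (real (Suc m) * \<epsilon>) * measure (M x') S"
    by (simp add: distrib_right exp_add)
  finally show ?case .
qed

lemma group_priv:
  fixes M :: "('n::finite \<Rightarrow> 'x) \<Rightarrow> 't::metric_space measure"
  assumes dp: "diff_private \<epsilon> M" and mech: "mechanism M" and S: "S \<in> sets borel"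
    and eps: "\<epsilon> \<ge> 0" and h: "hamming x x' \<le> k"
  shows "measure (M x) S \<le> exp (real k * \<epsilon>) * measure (M x') S"
proof -
  have "measure (M x) S \<le> exp (real (hamming x x') * \<epsilon>) * measure (M x') S"
    using group_priv_aux[OF dp mech S] by blast
  also have "\<dots> \<le> exp (real k * \<epsilon>) * measure (M x') S"
    using h eps by (intro mult_right_mono) (auto intro!: mult_right_mono)
  finally show ?thesis .
qed

lemma hamming_sym: "hamming x x' = hamming x' x"
  unfolding hamming_def by (metis)


lemma loss_lb:
  fixes M :: "('n::finite \<Rightarrow> 'x) \<Rightarrow> 't::metric_space measure"
  assumes mech: "mechanism M" and l_mono: "mono_on {0..} l" and r: "r \<ge> 0"
    and l_nonneg: "\<And>t. t \<ge> 0 \<Longrightarrow> l t \<ge> 0"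
  shows "ennreal (l r * measure (M y) (- ball t r)) \<le> exp_loss l M y t"
proof -
  interpret prob_space "M y" using mech_prob[OF mech] .
  have meas: "- ball t r \<in> sets (M y)" using mech_sets[OF mech] by simp
  have "ennreal (l r * measure (M y) (- ball t r)) = ennreal (l r) * emeasure (M y) (- ball t r)"
    using l_nonneg[OF r] by (simp add: emeasure_eq_measure ennreal_mult)
  also have "\<dots> = (\<integral>\<^sup>+ s. ennreal (l r) * indicator (- ball t r) s \<partial>M y)"
    using meas by (simp add: nn_integral_cmult_indicator)
  also have "\<dots> \<le> (\<integral>\<^sup>+ s. ennreal (l (dist s t)) \<partial>M y)"
  proof (intro nn_integral_mono)
    fix s
    show "ennreal (l r) * indicator (- ball t r) s \<le> ennreal (l (dist s t))"
    proof (cases "s \<in> ball t r")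
      case False
      hence "r \<le> dist s t" by (simp add: dist_commute)
      hence "l r \<le> l (dist s t)" using l_mono r by (auto intro: mono_onD)
      thus ?thesis using False by (simp add: ennreal_leI)
    qed simp
  qed
  finally show ?thesis unfolding exp_loss_def .
qed

lemma loss_meas:
  fixes t :: "'t::metric_space"
  assumes l_mono: "mono_on {0..} l"
  shows "(\<lambda>s. ennreal (l (dist s t))) \<in> borel_measurable borel"
proof -
  define l' where "l' u = l (max u 0)" for u
  have "mono l'" unfolding l'_def mono_def using l_mono by (auto intro!: mono_onD[OF l_mono])
  hence m: "l' \<in> borel_measurable borel" by (rule borel_measurable_mono)
  have eq: "(\<lambda>s. ennreal (l (dist s t))) = (\<lambda>s. ennreal (l' (dist s t)))"
    unfolding l'_def by simp
  show ?thesis unfolding eq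
    by (intro measurable_compose[OF _ measurable_ennreal] measurable_compose[OF _ m]) (intro borel_measurable_continuous_onI continuous_intros)
qed

lemma integral_dom:
  fixes M :: "('n::finite \<Rightarrow> 'x) \<Rightarrow> 't::metric_space measure"
  assumes mech: "mechanism M" and c: "c \<ge> 0"
    and dom: "\<And>S. S \<in> sets borel \<Longrightarrow> measure (M a) S \<le> c * measure (M b) S"
    and g: "g \<in> borel_measurable borel"
  shows "nn_integral (M a) g \<le> ennreal c * nn_integral (M b) g"
proof -
  interpret A: prob_space "M a" using mech_prob[OF mech] .
  interpret B: prob_space "M b" using mech_prob[OF mech] .
  have sa: "sets (M a) = sets borel" "sets (M b) = sets borel" using mech_sets[OF mech] by auto
  have "M a \<le> scale_measure (ennreal c) (M b)"
    unfolding le_measure_iff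
  proof (simp add: space_scale_measure sa mech_space[OF mech] le_fun_def, intro allI)
    fix S
    show "emeasure (M a) S \<le> ennreal c * emeasure (M b) S"
    proof (cases "S \<in> sets borel")
      case True
      thus ?thesis using dom[OF True] c
        by (simp add: A.emeasure_eq_measure B.emeasure_eq_measure ennreal_mult[symmetric] ennreal_leI)
    next
      case False
      thus ?thesis using sa by (simp add: emeasure_notin_sets)
    qed
  qed
  hence "nn_integral (M a) g \<le> nn_integral (scale_measure (ennreal c) (M b)) g"
    by (intro nn_integral_mono_measure) (simp add: sa)
  also have "\<dots> = ennreal c * nn_integral (M b) g"
    using g sa by (intro nn_integral_scale_measure) (simp add: measurable_def)
  finally show ?thesis .
qed


lemma approx_sep:
  fixes M :: "('n::finite \<Rightarrow> 'x) \<Rightarrow> 't::metric_space measure"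
    and f :: "('n \<Rightarrow> 'x) \<Rightarrow> 't"
  assumes mech: "mechanism M"
    and approx: "\<And>\<eta>. \<eta> > 0 \<Longrightarrow> \<exists>x'. hamming x x' \<le> k \<and> 2 * r - \<eta> < dist (f x) (f x')"
    and d: "\<delta> > 0"
  shows "\<exists>x'. hamming x x' \<le> k \<and> measure (M x) (ball (f x) r \<inter> ball (f x') r) < \<delta>"
proof -
  interpret prob_space "M x" using mech_prob[OF mech] .
  have sx: "sets (M x) = sets borel" using mech_sets[OF mech] .
  define A where "A m = {s. r - inverse (real (Suc m)) < dist (f x) s \<and> dist (f x) s < r}" for m
  have "open (A m)" for m unfolding A_def
    by (intro open_Collect_conj open_Collect_less continuous_intros)
  hence Am: "range A \<subseteq> sets (M x)" using sx by auto
  have dec: "decseq A"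
  proof (rule decseq_SucI)
    fix m
    have "inverse (real (Suc (Suc m))) \<le> inverse (real (Suc m))"
      by (intro le_imp_inverse_le) auto
    thus "A (Suc m) \<subseteq> A m" unfolding A_def by (smt (verit) Collect_mono_iff)
  qed
  have empty: "(\<Inter>m. A m) = {}"
  proof (rule ccontr)
    assume "(\<Inter>m. A m) \<noteq> {}"
    then obtain s where s: "\<And>m. s \<in> A m" by blast
    hence "dist (f x) s < r" unfolding A_def by blast
    then obtain m where "inverse (real (Suc m)) < r - dist (f x) s"
      using reals_Archimedean[of "r - dist (f x) s"] by auto
    thus False using s[of m] unfolding A_def by auto
  qed
  have "(\<lambda>m. measure (M x) (A m)) \<longlonglongrightarrow> 0"
    using finite_Lim_measure_decseq[OF Am dec] empty by simp
  from order_tendstoD(2)[OF this d] obtain m where m: "measure (M x) (A m) < \<delta>"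
    by (auto simp: eventually_sequentially)
  obtain x' where x': "hamming x x' \<le> k" "2 * r - inverse (real (Suc m)) < dist (f x) (f x')"
    using approx[of "inverse (real (Suc m))"] by auto
  have sub: "ball (f x) r \<inter> ball (f x') r \<subseteq> A m"
  proof
    fix s assume s: "s \<in> ball (f x) r \<inter> ball (f x') r"
    have "dist (f x) (f x') \<le> dist (f x) s + dist (f x') s" by (metis dist_commute dist_triangle)
    thus "s \<in> A m" using s x'(2) unfolding A_def by auto
  qed
  have "measure (M x) (ball (f x) r \<inter> ball (f x') r) \<le> measure (M x) (A m)"
    using Am by (intro finite_measure_mono[OF sub]) auto
  thus ?thesis using m x'(1) by force
qed


lemma ball_split:
  fixes a b :: "'t::metric_space"
  shows "ball b r \<subseteq> (- ball a r) \<union> (ball a r \<inter> ball b r)" by auto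

lemma core1:
  fixes M :: "('n::finite \<Rightarrow> 'x) \<Rightarrow> 't::metric_space measure"
    and f :: "('n \<Rightarrow> 'x) \<Rightarrow> 't"
  assumes mech: "mechanism M" and dp: "diff_private \<epsilon> M" and eps: "\<epsilon> > 0"
    and l_nonneg: "\<And>t. t \<ge> 0 \<Longrightarrow> l t \<ge> 0" and l_mono: "mono_on {0..} l" and r: "r \<ge> 0"
    and approx: "\<And>\<eta>. \<eta> > 0 \<Longrightarrow> \<exists>x'. hamming x x' \<le> k \<and> 2 * r - \<eta> < dist (f x) (f x')"
  shows "ennreal (l r) / ennreal (exp (real k * \<epsilon>) + 1) \<le> (SUP y. exp_loss l M y (f y))"
proof (cases "(SUP y. exp_loss l M y (f y)) = top")
  case True show ?thesis by (subst True) (rule top_greatest)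
next
  case False
  define S where "S = (SUP y. exp_loss l M y (f y))"
  define s where "s = enn2real S"
  have Ss: "S = ennreal s" using False unfolding s_def S_def by (metis ennreal_enn2real_if)
  have s0: "s \<ge> 0" unfolding s_def by simp
  define L where "L = l r"
  have L0: "L \<ge> 0" using l_nonneg[OF r] unfolding L_def .
  define e where "e = exp (real k * \<epsilon>)"
  have e0: "e > 0" unfolding e_def by simp
  have lossy: "L * measure (M y) (- ball (f y) r) \<le> s" for y
  proof -
    have "ennreal (L * measure (M y) (- ball (f y) r)) \<le> exp_loss l M y (f y)"
      unfolding L_def by (rule loss_lb[OF mech l_mono r l_nonneg])
    also have "\<dots> \<le> S" unfolding S_def by (rule SUP_upper) simp
    finally show ?thesis using Ss s0 by (simp add: ennreal_le_iff)
  qed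
  have PC: "measure (M y) (- B) = 1 - measure (M y) B" if "B \<in> sets borel" for y B
  proof -
    interpret prob_space "M y" using mech_prob[OF mech] .
    show ?thesis using prob_compl[of B] that mech_sets[OF mech] mech_space[OF mech]
      by (simp add: Compl_eq_Diff_UNIV)
  qed
  interpret X: prob_space "M x" using mech_prob[OF mech] .
  have sx: "sets (M x) = sets borel" using mech_sets[OF mech] .
  define b where "b = measure (M x) (- ball (f x) r)"
  have 1: "L * b \<le> s" unfolding b_def by (rule lossy)
  have 2: "L * (1 - e * b) - \<delta> \<le> s" if d: "\<delta> > 0" for \<delta>
  proof -
    define d' where "d' = \<delta> / (L * e + 1)"
    have d': "d' > 0" unfolding d'_def using d L0 e0 by (simp add: add_nonneg_pos)
    obtain x' where x': "hamming x x' \<le> k" and C: "measure (M x) (ball (f x) r \<inter> ball (f x') r) < d'"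
      using approx_sep[OF mech approx d'] by blast
    define a where "a = measure (M x) (ball (f x) r \<inter> ball (f x') r)"
    have a0: "a \<ge> 0" unfolding a_def by simp
    have "measure (M x') (ball (f x') r) \<le> e * measure (M x) (ball (f x') r)"
      unfolding e_def using x' eps by (intro group_priv[OF dp mech]) (auto simp: hamming_sym)
    also have "measure (M x) (ball (f x') r) \<le> b + a"
    proof -
      have "measure (M x) (ball (f x') r) \<le> measure (M x) ((- ball (f x) r) \<union> (ball (f x) r \<inter> ball (f x') r))"
        using sx by (intro X.finite_measure_mono[OF ball_split]) auto
      also have "\<dots> \<le> b + a" unfolding a_def b_def using sx by (intro measure_Un_le) auto
      finally show ?thesis .
    qed
    hence "e * measure (M x) (ball (f x') r) \<le> e * (b + a)" using e0 by simp
    finally have B': "measure (M x') (ball (f x') r) \<le> e * (b + a)" .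
    have "L * (1 - e * (b + a)) \<le> L * (1 - measure (M x') (ball (f x') r))"
      using B' L0 by (intro mult_left_mono) auto
    also have "\<dots> = L * measure (M x') (- ball (f x') r)" by (simp add: PC)
    also have "\<dots> \<le> s" by (rule lossy)
    finally have *: "L * (1 - e * (b + a)) \<le> s" .
    have "L * e * a \<le> L * e * d'" using C a0 L0 e0 unfolding a_def by (intro mult_left_mono) auto
    also have "\<dots> \<le> \<delta>"
    proof -
      have "L * e * d' = \<delta> * (L * e / (L * e + 1))" unfolding d'_def by simp
      also have "\<dots> \<le> \<delta> * 1" using L0 e0 d by (intro mult_left_mono) (auto simp: divide_le_eq_1 add_nonneg_pos)
      finally show ?thesis by simp
    qed
    finally show ?thesis using * by (simp add: algebra_simps)
  qed
  have 3: "L * (1 - e * b) \<le> s"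
  proof (rule ccontr)
    define q where "q = L * (1 - e * b)"
    assume n: "\<not> q \<le> s"
    hence "0 < (q - s) / 2" by simp
    from 2[OF this] n show False unfolding q_def[symmetric] by (simp add: field_simps)
  qed
  have "L \<le> (e + 1) * s" using 1 3 e0 
  proof -
    have "e * (L * b) \<le> e * s" using 1 e0 by simp
    thus ?thesis using 3 by (simp add: algebra_simps)
  qed
  hence "L / (e + 1) \<le> s" using e0 by (simp add: field_simps)
  hence "ennreal (L / (e + 1)) \<le> ennreal s" by (rule ennreal_leI)
  thus ?thesis using L0 e0 Ss unfolding S_def L_def e_def
    by (simp add: divide_ennreal[symmetric] add_pos_pos)
qed


lemma core2:
  fixes M :: "('n::finite \<Rightarrow> 'x) \<Rightarrow> 't::metric_space measure"
    and f :: "('n \<Rightarrow> 'x) \<Rightarrow> 't"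
  assumes mech: "mechanism M" and dp: "diff_private \<epsilon> M" and eps: "\<epsilon> > 0"
    and l_nonneg: "\<And>t. t \<ge> 0 \<Longrightarrow> l t \<ge> 0" and l_mono: "mono_on {0..} l" and r: "r \<ge> 0"
    and unb: "unbiased l M f"
    and approx: "\<And>\<eta>. \<eta> > 0 \<Longrightarrow> \<exists>x'. hamming x x' \<le> k \<and> 2 * r - \<eta> < dist (f x) (f x')"
  shows "ennreal (l r) / ennreal (exp (2 * real k * \<epsilon>) + 1) \<le> exp_loss l M x (f x)"
proof (cases "exp_loss l M x (f x) = top")
  case True show ?thesis by (subst True) (rule top_greatest)
next
  case False
  define s where "s = enn2real (exp_loss l M x (f x))"
  have Ss: "exp_loss l M x (f x) = ennreal s" using False unfolding s_def by (metis ennreal_enn2real_if)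
  have s0: "s \<ge> 0" unfolding s_def by simp
  define L where "L = l r"
  have L0: "L \<ge> 0" using l_nonneg[OF r] unfolding L_def .
  define e where "e = exp (real k * \<epsilon>)"
  have e0: "e > 0" unfolding e_def by simp
  have e1: "e \<ge> 1" unfolding e_def using eps by simp
  have PC: "measure (M y) (- B) = 1 - measure (M y) B" if "B \<in> sets borel" for y B
  proof -
    interpret prob_space "M y" using mech_prob[OF mech] .
    show ?thesis using prob_compl[of B] that mech_sets[OF mech] mech_space[OF mech]
      by (simp add: Compl_eq_Diff_UNIV)
  qed
  have sy: "sets (M y) = sets borel" for y using mech_sets[OF mech] .
  interpret X: prob_space "M x" using mech_prob[OF mech] .
  define p where "p = measure (M x) (ball (f x) r)"
  have p0: "p \<ge> 0" unfolding p_def by simp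
  have 1: "L * (1 - p) \<le> s"
  proof -
    have "ennreal (L * measure (M x) (- ball (f x) r)) \<le> exp_loss l M x (f x)"
      unfolding L_def by (rule loss_lb[OF mech l_mono r l_nonneg])
    thus ?thesis using Ss s0 by (simp add: ennreal_le_iff PC p_def)
  qed
  have 2: "L * p - \<delta> \<le> e * e * s" if d: "\<delta> > 0" for \<delta>
  proof -
    define d' where "d' = \<delta> / (L * e * e * e + 1)"
    have pos: "L * e * e * e \<ge> 0" using L0 e0 by simp
    have d': "d' > 0" unfolding d'_def using d pos by (simp add: add_nonneg_pos)
    obtain x' where x': "hamming x x' \<le> k" and C: "measure (M x) (ball (f x) r \<inter> ball (f x') r) < d'"
      using approx_sep[OF mech approx d'] by blast
    define C where "C = ball (f x) r \<inter> ball (f x') r"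
    define a where "a = measure (M x) C"
    have a0: "a \<ge> 0" unfolding a_def by simp
    have gp1: "measure (M x') S \<le> e * measure (M x) S" if "S \<in> sets borel" for S
      unfolding e_def using x' eps that by (intro group_priv[OF dp mech]) (auto simp: hamming_sym)
    have gp2: "measure (M x) S \<le> e * measure (M x') S" if "S \<in> sets borel" for S
      unfolding e_def using x' eps that by (intro group_priv[OF dp mech]) auto
    have "ennreal (L * measure (M x') (- ball (f x') r)) \<le> exp_loss l M x' (f x')"
      unfolding L_def by (rule loss_lb[OF mech l_mono r l_nonneg])
    also have "\<dots> \<le> exp_loss l M x' (f x)" using unb unfolding unbiased_def by blast
    also have "\<dots> \<le> ennreal e * exp_loss l M x (f x)"
      unfolding exp_loss_def using e0
      by (intro integral_dom[OF mech] gp1 loss_meas[OF l_mono]) auto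
    also have "\<dots> = ennreal (e * s)" using Ss e0 s0 by (simp add: ennreal_mult)
    finally have A1: "L * measure (M x') (- ball (f x') r) \<le> e * s"
      using e0 s0 by (simp add: ennreal_le_iff)
    interpret X': prob_space "M x'" using mech_prob[OF mech] .
    have "measure (M x') (ball (f x) r) \<le> measure (M x') ((- ball (f x') r) \<union> C)"
      unfolding C_def using sy by (intro X'.finite_measure_mono) auto
    also have "\<dots> \<le> measure (M x') (- ball (f x') r) + measure (M x') C"
      unfolding C_def using sy by (intro measure_Un_le) auto
    also have "measure (M x') C \<le> e * a" unfolding a_def C_def by (intro gp1) auto
    finally have B1: "measure (M x') (ball (f x) r) \<le> measure (M x') (- ball (f x') r) + e * a"
      by simp
    have B2: "p \<le> e * measure (M x') (ball (f x) r)" unfolding p_def by (intro gp2) auto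
    have "L * p \<le> L * (e * (measure (M x') (- ball (f x') r) + e * a))"
      using B1 B2 L0 e0 by (intro mult_left_mono) (auto intro: order.trans)
    also have "\<dots> = e * (L * measure (M x') (- ball (f x') r)) + L * e * e * a"
      by (simp add: algebra_simps)
    also have "\<dots> \<le> e * (e * s) + L * e * e * a" using A1 e0 by simp
    finally have *: "L * p \<le> e * e * s + L * e * e * a" by simp
    have "L * e * e * a \<le> L * e * e * d'"
      using C a0 L0 e0 unfolding a_def C_def by (intro mult_left_mono) auto
    also have "\<dots> \<le> \<delta>"
    proof -
      have "L * e * e * d' = \<delta> * (L * e * e / (L * e * e * e + 1))" unfolding d'_def by simp
      also have "\<dots> \<le> \<delta> * 1"
      proof (intro mult_left_mono)
        have "L * e * e \<le> L * e * e * e + 1"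
        proof -
          have "L * e * e * 1 \<le> L * e * e * e" using L0 e1 by (intro mult_left_mono) auto
          thus ?thesis by simp
        qed
        thus "L * e * e / (L * e * e * e + 1) \<le> 1" using pos by (simp add: divide_le_eq_1 add_nonneg_pos)
      qed (use d in auto)
      finally show ?thesis by simp
    qed
    finally show ?thesis using * by (simp add: algebra_simps)
  qed
  have 3: "L * p \<le> e * e * s"
  proof (rule ccontr)
    define q where "q = L * p"
    assume n: "\<not> L * p \<le> e * e * s"
    hence "0 < (q - e * e * s) / 2" unfolding q_def by simp
    from 2[OF this] n show False unfolding q_def[symmetric] by (simp add: field_simps)
  qed
  have "L \<le> (e * e + 1) * s" using 1 3 by (simp add: algebra_simps)
  hence "L / (e * e + 1) \<le> s" using e0 by (simp add: field_simps add_pos_pos)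
  hence "ennreal (L / (e * e + 1)) \<le> ennreal s" by (rule ennreal_leI)
  moreover have "exp (2 * real k * \<epsilon>) = e * e" unfolding e_def by (simp add: exp_add[symmetric])
  ultimately show ?thesis using L0 e0 Ss unfolding L_def
    by (simp add: divide_ennreal[symmetric] add_pos_pos)
qed


lemma bridge:
  fixes f :: "('n::finite \<Rightarrow> 'x) \<Rightarrow> 't::metric_space"
  assumes H: "\<And>r. r \<ge> 0 \<Longrightarrow> (\<And>\<eta>. \<eta> > 0 \<Longrightarrow> \<exists>x'. hamming x x' \<le> k \<and> 2 * r - \<eta> < dist (f x) (f x'))
      \<Longrightarrow> ennreal (l r) / c \<le> Q"
  shows "ell_ext l (loc_mod f x (real k) / 2) / c \<le> Q"
proof -
  define w where "w = loc_mod f x (real k)"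
  have hx: "hamming x x = 0" unfolding hamming_def by simp
  have w0: "0 \<le> w" unfolding w_def loc_mod_def
    by (rule SUP_upper2[of x]) (auto simp: hx)
  have ex: "\<exists>x'. hamming x x' \<le> k \<and> z < ereal (dist (f x) (f x'))" if "z < w" for z
    using that unfolding w_def loc_mod_def less_SUP_iff by auto
  show ?thesis
  proof (cases w)
    case PInf
    have "ell_ext l (w / 2) = (SUP t \<in> {0..}. ennreal (l t))" using PInf by (simp add: ell_ext_def)
    hence "ell_ext l (w / 2) / c = (SUP t \<in> {0..}. ennreal (l t) / c)" by (simp add: SUP_divide_ennreal)
    also have "\<dots> \<le> Q"
    proof (rule SUP_least)
      fix t :: real assume t: "t \<in> {0..}"
      show "ennreal (l t) / c \<le> Q"
      proof (rule H)
        show "t \<ge> 0" using t by simp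
        fix \<eta> :: real assume "\<eta> > 0"
        from ex[of "ereal (2 * t)"] PInf obtain x' where "hamming x x' \<le> k" "2 * t < dist (f x) (f x')" by auto
        thus "\<exists>x'. hamming x x' \<le> k \<and> 2 * t - \<eta> < dist (f x) (f x')" using \<open>\<eta> > 0\<close> by force
      qed
    qed
    finally show ?thesis unfolding w_def .
  next
    case (real w')
    have w'0: "w' \<ge> 0" using w0 real by simp
    have "ell_ext l (w / 2) = ennreal (l (w' / 2))" using real by (simp add: ell_ext_def)
    also have "ennreal (l (w' / 2)) / c \<le> Q"
    proof (rule H)
      show "w' / 2 \<ge> 0" using w'0 by simp
      fix \<eta> :: real assume "\<eta> > 0"
      from ex[of "ereal (w' - \<eta>)"] real \<open>\<eta> > 0\<close> obtain x' where "hamming x x' \<le> k" "w' - \<eta> < dist (f x) (f x')" by auto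
      thus "\<exists>x'. hamming x x' \<le> k \<and> 2 * (w' / 2) - \<eta> < dist (f x) (f x')" by force
    qed
    finally show ?thesis unfolding w_def .
  next
    case MInf thus ?thesis using w0 by simp
  qed
qed

theorem theorem1:
  fixes f :: "('n::finite \<Rightarrow> 'x) \<Rightarrow> 't::metric_space"
    and l :: "real \<Rightarrow> real"
    and M :: "('n \<Rightarrow> 'x) \<Rightarrow> 't measure"
    and \<epsilon> :: real
  assumes l_nonneg: "\<And>t. t \<ge> 0 \<Longrightarrow> l t \<ge> 0"
    and l_mono: "mono_on {0..} l"
    and eps_pos: "\<epsilon> > 0"
    and mech: "mechanism M"
    and dp: "diff_private \<epsilon> M"
  shows "(\<forall>k::nat. k \<ge> 1 \<longrightarrow>
            (SUP x. exp_loss l M x (f x)) \<ge>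
            (SUP x. ell_ext l (loc_mod f x (real k) / 2) / ennreal (exp (real k * \<epsilon>) + 1)))
       \<and> (unbiased l M f \<longrightarrow>
            (\<forall>x. \<forall>k::nat. k \<ge> 1 \<longrightarrow>
              exp_loss l M x (f x) \<ge>
              ell_ext l (loc_mod f x (real k) / 2) / ennreal (exp (2 * real k * \<epsilon>) + 1)))"
proof (intro conjI allI impI)
  fix k :: nat
  show "(SUP x. ell_ext l (loc_mod f x (real k) / 2) / ennreal (exp (real k * \<epsilon>) + 1))
        \<le> (SUP x. exp_loss l M x (f x))"
  proof (rule SUP_least)
    fix x
    show "ell_ext l (loc_mod f x (real k) / 2) / ennreal (exp (real k * \<epsilon>) + 1) \<le> (SUP x. exp_loss l M x (f x))"
      by (rule bridge) (rule core1[OF mech dp eps_pos l_nonneg l_mono], auto)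
  qed
next
  fix x and k :: nat
  assume unb: "unbiased l M f"
  show "ell_ext l (loc_mod f x (real k) / 2) / ennreal (exp (2 * real k * \<epsilon>) + 1) \<le> exp_loss l M x (f x)"
    by (rule bridge) (rule core2[OF mech dp eps_pos l_nonneg l_mono _ unb], auto)
qed

end
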